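(* Let $\ell\geq2$ and $w\geq 0$. For every $d\geq0$, $\prod_{\lambda\in\mathrm{Par}(d)}\vartheta_\ell(\lambda)=\ell^{\,l(d)}$. Consequently $$\prod_{d=0}^{w}\ \prod_{\lambda\in\mathrm{Par}(d)}\vartheta_\ell(\lambda)^{k(\ell-2,w-d)}=\ell^{\,b_\ell(w)},$$ where $b_\ell(w)$ is defined by $\sum_{w\geq0}b_\ell(w)q^w=P(q)^{\ell-2}L(q)$.
   Context: $\mathrm{Par}(d)$ is the set of partitions of $d$, $l(\lambda)$ the number of parts, $m_n(\lambda)$ the multiplicity of part $n$, $l(d)=\sum_{\lambda\in\mathrm{Par}(d)}l(\lambda)$, and $L(q)=\sum_{d\geq0}l(d)q^d$, $P(q)=\prod_{i\geq1}(1-q^i)^{-1}$. $k(m,j)$ is the number of $m$-multipartitions of $j$ (tuples of $m$ partitions with total size $j$), i.e. the coefficient of $q^j$ in $P(q)^m$ (with $k(0,j)=\delta_{j0}$). For a prime $p$, $\nu_p$ is the $p$-adic valuation and $d_p(a)=\sum_{j\geq1}\lfloor a/p^j\rfloor$. For $r\geq1$, $\vartheta_{p^r}(\lambda)=\prod_{n\geq1,\ 0\leq\nu_p(n)<r}p^{(r-\nu_p(n))m_n(\lambda)+d_p(m_n(\lambda))}$. If $\ell=\prod_{i=1}^s p_i^{r_i}$ is the prime factorization, $\vartheta_\ell(\lambda)=\prod_{i=1}^s\vartheta_{p_i^{r_i}}(\lambda)$. *)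

theory Defs
  imports "HOL-Library.Multiset" "HOL-Computational_Algebra.Computational_Algebra"
begin

definition Par :: "nat \<Rightarrow> nat multiset set" where
  "Par d = {M. (\<forall>n\<in>#M. 0 < n) \<and> sum_mset M = d}"

text \<open>Number of parts l(lambda) is size M; multiplicity m_n(lambda) is count M n.\<close>
definition ltot :: "nat \<Rightarrow> nat" where
  "ltot d = (\<Sum>M\<in>Par d. size M)"

definition kmp :: "nat \<Rightarrow> nat \<Rightarrow> nat" where
  "kmp m j = card {xs :: nat multiset list. length xs = m \<and>
      (\<forall>M\<in>set xs. \<forall>n\<in>#M. 0 < n) \<and> sum_list (map sum_mset xs) = j}"

text \<open>P(q) = sum_d |Par d| q^d = prod (1-q^i)^(-1), and L(q).\<close>
definition Pfps :: "nat fps" where "Pfps = Abs_fps (\<lambda>d. card (Par d))"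
definition Lfps :: "nat fps" where "Lfps = Abs_fps (\<lambda>d. ltot d)"

definition bcoef :: "nat \<Rightarrow> nat \<Rightarrow> nat" where
  "bcoef l w = fps_nth (Pfps ^ (l - 2) * Lfps) w"

text \<open>d_p(a) = sum_{j>=1} floor(a/p^j); terms with j > a vanish for p >= 2.\<close>
definition dp :: "nat \<Rightarrow> nat \<Rightarrow> nat" where
  "dp p a = (\<Sum>j\<in>{1..a}. a div p ^ j)"

text \<open>theta_{p^r}(lambda); factors with m_n(lambda) = 0 equal 1 and are omitted.\<close>
definition theta_pp :: "nat \<Rightarrow> nat \<Rightarrow> nat multiset \<Rightarrow> nat" where
  "theta_pp p r M = (\<Prod>n\<in>{n\<in>set_mset M. 1 \<le> n \<and> multiplicity p n < r}.
      p ^ ((r - multiplicity p n) * count M n + dp p (count M n)))"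

definition theta :: "nat \<Rightarrow> nat multiset \<Rightarrow> nat" where
  "theta l M = (\<Prod>p\<in>prime_factors l. theta_pp p (multiplicity p l) M)"

end

theory Submission
  imports Defs
begin


lemma Par_mem: "M \<in> Par d \<longleftrightarrow> (\<forall>n\<in>#M. 0 < n) \<and> sum_mset M = d"
  by (simp add: Par_def)

lemma size_le_sum: "(\<forall>n\<in>#M. 0 < n) \<Longrightarrow> size M \<le> sum_mset (M::nat multiset)"
  by (induction M) auto

lemma count_mult_le: "count M n * n \<le> sum_mset (M::nat multiset)"
proof -
  have "M = filter_mset (\<lambda>x. x = n) M + filter_mset (\<lambda>x. x \<noteq> n) M" by simp
  hence "sum_mset M = sum_mset (filter_mset (\<lambda>x. x = n) M) + sum_mset (filter_mset (\<lambda>x. x \<noteq> n) M)"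
    by (metis sum_mset.union)
  moreover have "filter_mset (\<lambda>x. x = n) M = replicate_mset (count M n) n"
    by (simp add: filter_eq_replicate_mset)
  ultimately show ?thesis by simp
qed

lemma Par_set: "M \<in> Par d \<Longrightarrow> set_mset M \<subseteq> {1..d}"
proof
  fix x assume "M \<in> Par d" "x \<in> set_mset M"
  then have "0 < x" "count M x * x \<le> d" using count_mult_le[of M x] by (auto simp: Par_def)
  moreover have "count M x \<ge> 1" using \<open>x \<in> set_mset M\<close> by (simp add: Suc_le_eq)
  ultimately show "x \<in> {1..d}" by (auto intro: order.trans[rotated] simp: mult_le_mono1)
qed

lemma count_le_d: "M \<in> Par d \<Longrightarrow> 0 < n \<Longrightarrow> count M n \<le> d"
  using count_mult_le[of M n] by (auto simp: Par_def intro: order.trans[rotated])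

lemma finite_Par: "finite (Par d)"
proof -
  have "Par d \<subseteq> mset ` {xs. set xs \<subseteq> {1..d} \<and> length xs \<le> d}"
  proof
    fix M assume M: "M \<in> Par d"
    obtain xs where xs: "mset xs = M" using ex_mset by blast
    have "size M \<le> d" using M size_le_sum[of M] by (auto simp: Par_def)
    thus "M \<in> mset ` {xs. set xs \<subseteq> {1..d} \<and> length xs \<le> d}"
      using xs Par_set[OF M] by (auto intro!: image_eqI[of _ _ xs])
  qed
  thus ?thesis by (rule finite_subset) (auto intro: finite_lists_length_le)
qed

lemma size_eq_sum: "M \<in> Par d \<Longrightarrow> size M = (\<Sum>n\<in>{1..d}. count M n)"
  unfolding size_multiset_overloaded_eq
  by (rule sum.mono_neutral_left) (use Par_set[of M d] in \<open>auto simp: not_in_iff\<close>)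

definition G :: "nat \<Rightarrow> nat \<Rightarrow> nat" where
  "G d x = (if x \<le> d then card (Par (d - x)) else 0)"

lemma card_ge: assumes "0 < a"
  shows "card {M\<in>Par d. s \<le> count M a} = G d (s * a)"
proof (cases "s * a \<le> d")
  case True
  have "bij_betw (\<lambda>M. M - replicate_mset s a) {M\<in>Par d. s \<le> count M a} (Par (d - s * a))"
  proof (rule bij_betw_byWitness[where f' = "\<lambda>N. N + replicate_mset s a"])
    show "\<forall>M\<in>{M \<in> Par d. s \<le> count M a}. M - replicate_mset s a + replicate_mset s a = M"
      by (auto simp: count_le_replicate_mset_subset_eq)
    show "\<forall>N\<in>Par (d - s * a). N + replicate_mset s a - replicate_mset s a = N" by simp
    show "(\<lambda>M. M - replicate_mset s a) ` {M \<in> Par d. s \<le> count M a} \<subseteq> Par (d - s * a)"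
    proof safe
      fix M assume M: "M \<in> Par d" "s \<le> count M a"
      hence e: "M = (M - replicate_mset s a) + replicate_mset s a"
        by (auto simp: count_le_replicate_mset_subset_eq)
      have "sum_mset M = sum_mset (M - replicate_mset s a) + sum_mset (replicate_mset s a)"
        by (subst e) (simp only: sum_mset.union)
      hence "sum_mset M = sum_mset (M - replicate_mset s a) + s * a" by simp
      thus "M - replicate_mset s a \<in> Par (d - s * a)"
        using M by (auto simp: Par_def dest: in_diffD)
    qed
    show "(\<lambda>N. N + replicate_mset s a) ` Par (d - s * a) \<subseteq> {M \<in> Par d. s \<le> count M a}"
    proof safe
      fix N assume N: "N \<in> Par (d - s * a)"
      have "sum_mset (N + replicate_mset s a) = sum_mset N + s * a" by simp
      thus "N + replicate_mset s a \<in> Par d" using N True assms by (auto simp: Par_def)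
    qed simp
  qed
  thus ?thesis using True by (simp add: G_def bij_betw_same_card)
next
  case False
  have "{M\<in>Par d. s \<le> count M a} = {}"
  proof safe
    fix M assume M: "M \<in> Par d" "s \<le> count M a"
    have "s * a \<le> count M a * a" using M by simp
    also have "\<dots> \<le> d" using count_mult_le[of M a] M by (simp add: Par_def)
    finally show "M \<in> {}" using False by simp
  qed
  thus ?thesis using False by (simp only: G_def if_False card.empty)
qed

lemma card_filter_sum: "finite A \<Longrightarrow> card {x\<in>A. P x} = (\<Sum>x\<in>A. if P x then 1 else 0)"
  by (subst sum.inter_filter[symmetric]) simp_all

lemma div_card: assumes "c \<le> d" "0 < k"
  shows "c div k = card {t\<in>{1..d}. t * k \<le> c}"
proof -
  have "{t\<in>{1..d}. t * k \<le> c} = {1..c div k}"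
  proof safe
    fix t assume "t \<in> {1..d}" "t * k \<le> c"
    thus "t \<in> {1..c div k}" using assms by (simp add: less_eq_div_iff_mult_less_eq)
  next
    fix t assume t: "t \<in> {1..c div k}"
    have "c div k \<le> c" by (rule div_le_dividend)
    thus "t \<in> {1..d}" using t assms by (simp only: atLeastAtMost_iff) (meson order.trans)
    show "t * k \<le> c" using t assms by (simp add: less_eq_div_iff_mult_less_eq)
  qed
  thus ?thesis by simp
qed

lemma sum_div: assumes "0 < n" "0 < k"
  shows "(\<Sum>M\<in>Par d. count M n div k) = (\<Sum>t\<in>{1..d}. G d (t * k * n))"
proof -
  have "(\<Sum>M\<in>Par d. count M n div k) = (\<Sum>M\<in>Par d. \<Sum>t\<in>{1..d}. if t * k \<le> count M n then 1 else 0)"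
    by (rule sum.cong[OF refl], subst div_card[OF count_le_d assms(2)])
       (auto simp: card_filter_sum[of "{1..d}", simplified] assms(1))
  also have "\<dots> = (\<Sum>t\<in>{1..d}. \<Sum>M\<in>Par d. if t * k \<le> count M n then 1 else 0)"
    by (rule sum.swap)
  also have "\<dots> = (\<Sum>t\<in>{1..d}. G d (t * k * n))"
    by (rule sum.cong[OF refl]) (simp add: card_ge[OF assms(1), symmetric] card_filter_sum finite_Par)
  finally show ?thesis .
qed

lemma lemmaA: assumes "0 < n" "0 < k"
  shows "(\<Sum>M\<in>Par d. count M n div k) = (\<Sum>M\<in>Par d. count M (n * k))"
  using sum_div[OF assms] sum_div[of "n*k" 1 d] assms by (simp add: mult_ac)



lemma mult_pow: assumes "prime (p::nat)" "0 < n"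
  shows "multiplicity p (n * p ^ j) = multiplicity p n + j"
proof -
  have "p \<noteq> 0" "p ^ j \<noteq> 0" "\<not> is_unit p" using assms prime_gt_1_nat by auto
  thus ?thesis using assms
    by (simp add: prime_elem_multiplicity_mult_distrib multiplicity_same_power)
qed

lemma mult_le: assumes "prime (p::nat)" "0 < N" shows "multiplicity p N \<le> N"
proof -
  have "p ^ multiplicity p N dvd N" by (rule multiplicity_dvd)
  hence "p ^ multiplicity p N \<le> N" using assms dvd_imp_le by blast
  moreover have "multiplicity p N < 2 ^ multiplicity p N" by simp
  moreover have "2 ^ multiplicity p N \<le> p ^ multiplicity p N"
    using prime_ge_2_nat[OF assms(1)] power_mono by blast
  ultimately show ?thesis by linarith
qed

lemma step1:
  fixes C :: "nat \<Rightarrow> nat" assumes p: "prime p" and C0: "\<And>a. d < a \<Longrightarrow> C a = 0"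
  shows "(\<Sum>n\<in>{n\<in>{1..d}. multiplicity p n < r}. C (n * p ^ j)) =
         (\<Sum>N\<in>{1..d}. if j \<le> multiplicity p N \<and> multiplicity p N < r + j then C N else 0)"
proof -
  let ?S = "{n\<in>{1..d}. multiplicity p n < r}"
  let ?B = "{N\<in>{1..d}. j \<le> multiplicity p N \<and> multiplicity p N < r + j}"
  have pj: "0 < p ^ j" using p prime_gt_0_nat by simp
  have inj: "inj_on (\<lambda>n. n * p ^ j) ?S" using pj by (auto simp: inj_on_def)
  have "(\<Sum>n\<in>?S. C (n * p ^ j)) = sum C ((\<lambda>n. n * p ^ j) ` ?S)"
    using sum.reindex[OF inj, of C] by simp
  also have "\<dots> = sum C ?B"
  proof (rule sum.mono_neutral_right)
    show "finite ((\<lambda>n. n * p ^ j) ` ?S)" by simp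
    show "?B \<subseteq> (\<lambda>n. n * p ^ j) ` ?S"
    proof
      fix N assume N: "N \<in> ?B"
      hence dv: "p ^ j dvd N" by (intro multiplicity_dvd') simp
      then obtain m where m: "N = m * p ^ j" by (metis dvd_def mult.commute)
      have "0 < m" using m N by (cases m) auto
      have "m \<le> N" using m pj \<open>0 < m\<close> by (simp add: Suc_le_eq)
      moreover have "multiplicity p N = multiplicity p m + j" using m mult_pow[OF p \<open>0 < m\<close>] by simp
      moreover have "m \<le> d" using \<open>m \<le> N\<close> N by simp
      ultimately show "N \<in> (\<lambda>n. n * p ^ j) ` ?S" using N \<open>0 < m\<close> m
        by (intro image_eqI[of _ _ m]) auto
    qed
    show "\<forall>x\<in>(\<lambda>n. n * p ^ j) ` ?S - ?B. C x = 0"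
    proof
      fix x assume x: "x \<in> (\<lambda>n. n * p ^ j) ` ?S - ?B"
      then obtain n where n: "n \<in> ?S" "x = n * p ^ j" by auto
      have "multiplicity p x = multiplicity p n + j" using n mult_pow[OF p, of n j] by simp
      moreover have "1 \<le> x" using n pj by (simp add: Suc_le_eq)
      ultimately have "d < x" using x n by auto
      thus "C x = 0" by (rule C0)
    qed
  qed
  also have "\<dots> = (\<Sum>N\<in>{1..d}. if j \<le> multiplicity p N \<and> multiplicity p N < r + j then C N else 0)"
    by (rule sum.inter_filter) simp
  finally show ?thesis .
qed

lemma card_min: assumes "v \<le> d"
  shows "card {j\<in>{1..d}. j \<le> v \<and> v < r + j} = min v r"
proof -
  have "{j\<in>{1..d}. j \<le> v \<and> v < r + j} = {v - min v r<..v}" using assms by auto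
  thus ?thesis by simp
qed

lemma key_arith:
  fixes C :: "nat \<Rightarrow> nat" assumes p: "prime p" and C0: "\<And>a. d < a \<Longrightarrow> C a = 0"
  shows "(\<Sum>n\<in>{n\<in>{1..d}. multiplicity p n < r}. (r - multiplicity p n) * C n + (\<Sum>j\<in>{1..d}. C (n * p ^ j)))
         = r * (\<Sum>n\<in>{1..d}. C n)"
proof -
  let ?S = "{n\<in>{1..d}. multiplicity p n < r}"
  have a: "(\<Sum>n\<in>?S. (r - multiplicity p n) * C n) = (\<Sum>N\<in>{1..d}. (r - multiplicity p N) * C N)"
    by (subst sum.inter_filter) (auto intro!: sum.cong)
  have "(\<Sum>n\<in>?S. \<Sum>j\<in>{1..d}. C (n * p ^ j)) = (\<Sum>j\<in>{1..d}. \<Sum>n\<in>?S. C (n * p ^ j))"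
    by (rule sum.swap)
  also have "\<dots> = (\<Sum>j\<in>{1..d}. \<Sum>N\<in>{1..d}. if j \<le> multiplicity p N \<and> multiplicity p N < r + j then C N else 0)"
    by (rule sum.cong[OF refl]) (rule step1[OF p C0])
  also have "\<dots> = (\<Sum>N\<in>{1..d}. \<Sum>j\<in>{1..d}. if j \<le> multiplicity p N \<and> multiplicity p N < r + j then C N else 0)"
    by (rule sum.swap)
  also have "\<dots> = (\<Sum>N\<in>{1..d}. min (multiplicity p N) r * C N)"
  proof (rule sum.cong[OF refl])
    fix N assume N: "N \<in> {1..d}"
    have "(\<Sum>j\<in>{1..d}. if j \<le> multiplicity p N \<and> multiplicity p N < r + j then C N else 0)
        = card {j\<in>{1..d}. j \<le> multiplicity p N \<and> multiplicity p N < r + j} * C N"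
      by (subst sum.inter_filter[symmetric]) simp_all
    also have "\<dots> = min (multiplicity p N) r * C N"
      using card_min[of "multiplicity p N" d r] mult_le[OF p, of N] N by simp
    finally show "(\<Sum>j\<in>{1..d}. if j \<le> multiplicity p N \<and> multiplicity p N < r + j then C N else 0)
        = min (multiplicity p N) r * C N" .
  qed
  finally have b: "(\<Sum>n\<in>?S. \<Sum>j\<in>{1..d}. C (n * p ^ j)) = (\<Sum>N\<in>{1..d}. min (multiplicity p N) r * C N)" .
  have "(\<Sum>n\<in>?S. (r - multiplicity p n) * C n + (\<Sum>j\<in>{1..d}. C (n * p ^ j)))
      = (\<Sum>N\<in>{1..d}. (r - multiplicity p N) * C N + min (multiplicity p N) r * C N)"
    by (simp only: sum.distrib a b)
  also have "\<dots> = (\<Sum>N\<in>{1..d}. r * C N)"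
  proof (rule sum.cong[OF refl])
    fix N
    have "r - multiplicity p N + min (multiplicity p N) r = r" by simp
    thus "(r - multiplicity p N) * C N + min (multiplicity p N) r * C N = r * C N"
      by (metis add_mult_distrib)
  qed
  finally show ?thesis by (simp add: sum_distrib_left)
qed



lemma dp_eq: assumes "2 \<le> p" "c \<le> d" shows "dp p c = (\<Sum>j\<in>{1..d}. c div p ^ j)"
  unfolding dp_def
proof (rule sum.mono_neutral_left)
  show "\<forall>j\<in>{1..d} - {1..c}. c div p ^ j = 0"
  proof
    fix j assume j: "j \<in> {1..d} - {1..c}"
    have "c < j" using j by auto
    also have "j < 2 ^ j" by simp
    also have "2 ^ j \<le> p ^ j" using assms power_mono by blast
    finally show "c div p ^ j = 0" by simp
  qed
qed (use assms in auto)

lemma theta_pp_eq: assumes "M \<in> Par d"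
  shows "theta_pp p r M = p ^ (\<Sum>n\<in>{n\<in>{1..d}. multiplicity p n < r}.
            (r - multiplicity p n) * count M n + dp p (count M n))"
proof -
  have "theta_pp p r M = p ^ (\<Sum>n\<in>{n\<in>set_mset M. 1 \<le> n \<and> multiplicity p n < r}.
            (r - multiplicity p n) * count M n + dp p (count M n))"
    unfolding theta_pp_def by (simp add: power_sum)
  also have "(\<Sum>n\<in>{n\<in>set_mset M. 1 \<le> n \<and> multiplicity p n < r}.
            (r - multiplicity p n) * count M n + dp p (count M n)) =
         (\<Sum>n\<in>{n\<in>{1..d}. multiplicity p n < r}.
            (r - multiplicity p n) * count M n + dp p (count M n))"
  proof (rule sum.mono_neutral_left)
    show "\<forall>i\<in>{n\<in>{1..d}. multiplicity p n < r} - {n\<in>set_mset M. 1 \<le> n \<and> multiplicity p n < r}.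
      (r - multiplicity p i) * count M i + dp p (count M i) = 0"
    proof
      fix i assume "i \<in> {n\<in>{1..d}. multiplicity p n < r} - {n\<in>set_mset M. 1 \<le> n \<and> multiplicity p n < r}"
      hence "count M i = 0" by (auto simp: not_in_iff)
      thus "(r - multiplicity p i) * count M i + dp p (count M i) = 0" by (simp add: dp_def)
    qed
  qed (use Par_set[OF assms] in auto)
  finally show ?thesis .
qed

lemma exp_sum: assumes p: "prime p"
  shows "(\<Sum>M\<in>Par d. \<Sum>n\<in>{n\<in>{1..d}. multiplicity p n < r}.
            (r - multiplicity p n) * count M n + dp p (count M n)) = r * ltot d"
proof -
  define C where "C a = (\<Sum>M\<in>Par d. count M a)" for a
  let ?S = "{n\<in>{1..d}. multiplicity p n < r}"
  have C0: "C a = 0" if "d < a" for a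
    unfolding C_def by (rule sum.neutral) (use Par_set that in \<open>fastforce simp: not_in_iff\<close>)
  have p2: "2 \<le> p" using p prime_ge_2_nat by blast
  have "(\<Sum>M\<in>Par d. \<Sum>n\<in>?S. (r - multiplicity p n) * count M n + dp p (count M n))
      = (\<Sum>n\<in>?S. \<Sum>M\<in>Par d. (r - multiplicity p n) * count M n + dp p (count M n))"
    by (rule sum.swap)
  also have "\<dots> = (\<Sum>n\<in>?S. (r - multiplicity p n) * C n + (\<Sum>j\<in>{1..d}. C (n * p ^ j)))"
  proof (rule sum.cong[OF refl])
    fix n assume n: "n \<in> ?S"
    have "(\<Sum>M\<in>Par d. dp p (count M n)) = (\<Sum>M\<in>Par d. \<Sum>j\<in>{1..d}. count M n div p ^ j)"
    proof (rule sum.cong[OF refl])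
      fix M assume M: "M \<in> Par d"
      have "count M n \<le> d" using count_le_d[OF M] n by simp
      thus "dp p (count M n) = (\<Sum>j\<in>{1..d}. count M n div p ^ j)" by (rule dp_eq[OF p2])
    qed
    also have "\<dots> = (\<Sum>j\<in>{1..d}. \<Sum>M\<in>Par d. count M n div p ^ j)" by (rule sum.swap)
    also have "\<dots> = (\<Sum>j\<in>{1..d}. C (n * p ^ j))"
      by (rule sum.cong[OF refl]) (use n p prime_gt_0_nat in \<open>auto simp: C_def intro!: lemmaA\<close>)
    finally show "(\<Sum>M\<in>Par d. (r - multiplicity p n) * count M n + dp p (count M n)) =
        (r - multiplicity p n) * C n + (\<Sum>j\<in>{1..d}. C (n * p ^ j))"
      by (simp add: sum.distrib C_def sum_distrib_left)
  qed
  also have "\<dots> = r * (\<Sum>n\<in>{1..d}. C n)" by (rule key_arith[OF p C0])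
  also have "(\<Sum>n\<in>{1..d}. C n) = ltot d"
    unfolding ltot_def C_def
    by (subst sum.swap) (rule sum.cong[OF refl], simp add: size_eq_sum)
  finally show ?thesis .
qed

lemma prod_theta_pp: assumes "prime p"
  shows "(\<Prod>M\<in>Par d. theta_pp p r M) = p ^ (r * ltot d)"
proof -
  have "(\<Prod>M\<in>Par d. theta_pp p r M) = (\<Prod>M\<in>Par d. p ^ (\<Sum>n\<in>{n\<in>{1..d}. multiplicity p n < r}.
            (r - multiplicity p n) * count M n + dp p (count M n)))"
    by (rule prod.cong[OF refl]) (rule theta_pp_eq)
  also have "\<dots> = p ^ (r * ltot d)" by (subst power_sum[symmetric]) (subst exp_sum[OF assms], rule refl)
  finally show ?thesis .
qed

lemma part1: assumes "2 \<le> l" shows "(\<Prod>M\<in>Par d. theta l M) = l ^ ltot d"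
proof -
  have "(\<Prod>M\<in>Par d. theta l M) = (\<Prod>p\<in>prime_factors l. \<Prod>M\<in>Par d. theta_pp p (multiplicity p l) M)"
    unfolding theta_def by (rule prod.swap)
  also have "\<dots> = (\<Prod>p\<in>prime_factors l. (p ^ multiplicity p l) ^ ltot d)"
    by (rule prod.cong[OF refl]) (subst prod_theta_pp, auto simp: in_prime_factors_imp_prime power_mult)
  also have "\<dots> = (\<Prod>p\<in>prime_factors l. p ^ multiplicity p l) ^ ltot d"
    by (simp add: prod_power_distrib)
  also have "(\<Prod>p\<in>prime_factors l. p ^ multiplicity p l) = l"
    using assms prod_prime_factors[of l] by simp
  finally show ?thesis .
qed



definition Y :: "nat \<Rightarrow> nat \<Rightarrow> nat multiset list set" where
  "Y m j = {xs :: nat multiset list. length xs = m \<and>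
      (\<forall>M\<in>set xs. \<forall>n\<in>#M. 0 < n) \<and> sum_list (map sum_mset xs) = j}"

lemma finite_Y: "finite (Y m j)"
proof -
  have "Y m j \<subseteq> {xs. set xs \<subseteq> (\<Union>i\<in>{..j}. Par i) \<and> length xs \<le> m}"
  proof safe
    fix xs M assume xs: "xs \<in> Y m j" and M: "M \<in> set xs"
    have "sum_mset M \<le> j" using xs M unfolding Y_def
      by (auto intro!: member_le_sum_list)
    thus "M \<in> (\<Union>i\<in>{..j}. Par i)" using xs M by (auto simp: Y_def Par_def)
  qed (auto simp: Y_def)
  thus ?thesis by (rule finite_subset) (auto intro!: finite_lists_length_le finite_Par)
qed

lemma Y_Suc: "Y (Suc m) j = (\<lambda>(M,ys). M # ys) ` (\<Union>i\<in>{0..j}. Par i \<times> Y m (j - i))"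
proof safe
  fix xs assume xs: "xs \<in> Y (Suc m) j"
  then obtain M ys where e: "xs = M # ys" by (cases xs) (auto simp: Y_def)
  have "M \<in> Par (sum_mset M)" "ys \<in> Y m (j - sum_mset M)" "sum_mset M \<in> {0..j}"
    using xs e by (auto simp: Y_def Par_def)
  thus "xs \<in> (\<lambda>(M,ys). M # ys) ` (\<Union>i\<in>{0..j}. Par i \<times> Y m (j - i))"
    using e by blast
qed (auto simp: Y_def Par_def)

lemma card_Y: "card (Y m j) = (Pfps ^ m) $ j"
proof (induction m arbitrary: j)
  case 0
  have "Y 0 j = (if j = 0 then {[]} else {})" by (auto simp: Y_def)
  thus ?case by simp
next
  case (Suc m)
  have inj: "inj_on (\<lambda>(M,ys). M # ys) (\<Union>i\<in>{0..j}. Par i \<times> Y m (j - i))"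
    by (auto simp: inj_on_def)
  have "card (Y (Suc m) j) = card (\<Union>i\<in>{0..j}. Par i \<times> Y m (j - i))"
    unfolding Y_Suc by (rule card_image[OF inj])
  also have "\<dots> = (\<Sum>i\<in>{0..j}. card (Par i \<times> Y m (j - i)))"
    apply (rule card_UN_disjoint)
      apply simp
     apply (simp add: finite_Par finite_Y)
    apply (auto simp: Par_def)
    done
  also have "\<dots> = (\<Sum>i\<in>{0..j}. Pfps $ i * (Pfps ^ m) $ (j - i))"
    by (rule sum.cong[OF refl]) (simp add: card_cartesian_product Suc.IH Pfps_def)
  also have "\<dots> = (Pfps ^ Suc m) $ j" by (simp add: fps_mult_nth)
  finally show ?case .
qed

lemma kmp_eq: "kmp m j = (Pfps ^ m) $ j"
  using card_Y unfolding kmp_def Y_def by simp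

theorem mainTheorem6:
  fixes l w :: nat
  assumes "l \<ge> 2"
  shows "(\<forall>d. (\<Prod>M\<in>Par d. theta l M) = l ^ ltot d) \<and>
         (\<Prod>d\<in>{0..w}. \<Prod>M\<in>Par d. theta l M ^ kmp (l - 2) (w - d)) = l ^ bcoef l w"
proof
  show "\<forall>d. (\<Prod>M\<in>Par d. theta l M) = l ^ ltot d" using part1[OF assms] by blast
  have "(\<Prod>d\<in>{0..w}. \<Prod>M\<in>Par d. theta l M ^ kmp (l - 2) (w - d))
      = (\<Prod>d\<in>{0..w}. l ^ (ltot d * kmp (l - 2) (w - d)))"
    by (rule prod.cong[OF refl]) (simp add: prod_power_distrib[symmetric] part1[OF assms] power_mult)
  also have "\<dots> = l ^ (\<Sum>d\<in>{0..w}. ltot d * kmp (l - 2) (w - d))" by (simp add: power_sum)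
  also have "(\<Sum>d\<in>{0..w}. ltot d * kmp (l - 2) (w - d)) = bcoef l w"
    unfolding bcoef_def by (subst mult.commute) (simp add: fps_mult_nth kmp_eq Lfps_def)
  finally show "(\<Prod>d\<in>{0..w}. \<Prod>M\<in>Par d. theta l M ^ kmp (l - 2) (w - d)) = l ^ bcoef l w" .
qed

end
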